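(* Let $(X,d)$ be a finite metric space and $\mathcal{Y}=(Y_i,d_i)_{i\in I}$ a finite family of metric spaces. If $X$ embeds stochastically into $\mathcal{Y}$ with distortion $D$, then $Wa(X)$ embeds stochastically into the family $(Wa(Y_i))_{i\in I}$ with distortion $D$. More precisely, if the numbers $p_i$ and maps $f_i:X\to Y_i$ realize the stochastic embedding of $X$, then the same $p_i$ and the push-forward maps $(f_i)_*:Wa(X)\to Wa(Y_i)$, $\mu\mapsto (f_i)_*\mu$, realize a stochastic embedding of $Wa(X)$ with distortion $D$.
   Context: For a metric space $(Y,d)$, $P_1(Y)$ is the set of Borel probability measures on $Y$ with finite first moment, and $Wa(Y)$ is $P_1(Y)$ with the Wasserstein distance $Wa(\mu,\nu)=\inf_\pi\int d(x,y)\,d\pi(x,y)$, the infimum over couplings $\pi$ (probability measures on $Y\times Y$ with marginals $\mu,\nu$). A metric space $(X,d)$ embeds stochastically with distortion $D\ge1$ into a finite family $(Y_i,d_i)_{i\in I}$ of metric spaces if there are numbers $p_i\ge0$ with $\sum_i p_i=1$ and maps $f_i:X\to Y_i$ such that each $f_i$ is non-contracting ($d_i(f_i(x),f_i(y))\ge d(x,y)$) and $\sum_i p_i d_i(f_i(x),f_i(y))\le D\,d(x,y)$ for all $x,y\in X$. *)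

theory Defs
  imports "HOL-Probability.Probability"
begin

definition borel_of :: "'a topology \<Rightarrow> 'a measure" where
  "borel_of T = sigma (topspace T) {U. openin T U}"

definition mborel :: "'a set \<Rightarrow> ('a \<Rightarrow> 'a \<Rightarrow> real) \<Rightarrow> 'a measure" where
  "mborel M d = borel_of (Metric_space.mtopology M d)"

definition P1 :: "'a set \<Rightarrow> ('a \<Rightarrow> 'a \<Rightarrow> real) \<Rightarrow> 'a measure set" where
  "P1 M d = {\<mu>. sets \<mu> = sets (mborel M d) \<and> prob_space \<mu> \<and>
                 (\<exists>x0\<in>M. (\<integral>\<^sup>+ y. ennreal (d x0 y) \<partial>\<mu>) < \<infinity>)}"

definition couplings :: "'a set \<Rightarrow> ('a \<Rightarrow> 'a \<Rightarrow> real) \<Rightarrow> 'a measure \<Rightarrow> 'a measure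
    \<Rightarrow> ('a \<times> 'a) measure set" where
  "couplings M d \<mu> \<nu> = {\<pi>.
     sets \<pi> = sets (borel_of (prod_topology (Metric_space.mtopology M d) (Metric_space.mtopology M d)))
     \<and> prob_space \<pi>
     \<and> distr \<pi> (mborel M d) fst = \<mu> \<and> distr \<pi> (mborel M d) snd = \<nu>}"

definition wass :: "'a set \<Rightarrow> ('a \<Rightarrow> 'a \<Rightarrow> real) \<Rightarrow> 'a measure \<Rightarrow> 'a measure \<Rightarrow> real" where
  "wass M d \<mu> \<nu> = enn2real (INF \<pi>\<in>couplings M d \<mu> \<nu>. \<integral>\<^sup>+ z. ennreal (d (fst z) (snd z)) \<partial>\<pi>)"

definition stoch_embedding ::
  "'a set \<Rightarrow> ('a \<Rightarrow> 'a \<Rightarrow> real) \<Rightarrow> 'i set \<Rightarrow> ('i \<Rightarrow> 'b set) \<Rightarrow> ('i \<Rightarrow> 'b \<Rightarrow> 'b \<Rightarrow> real)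
    \<Rightarrow> real \<Rightarrow> ('i \<Rightarrow> real) \<Rightarrow> ('i \<Rightarrow> 'a \<Rightarrow> 'b) \<Rightarrow> bool" where
  "stoch_embedding X d I Y dY D p f \<longleftrightarrow>
     finite I \<and> 1 \<le> D \<and> (\<forall>i\<in>I. p i \<ge> 0) \<and> (\<Sum>i\<in>I. p i) = 1 \<and>
     (\<forall>i\<in>I. f i \<in> X \<rightarrow> Y i) \<and>
     (\<forall>i\<in>I. \<forall>x\<in>X. \<forall>y\<in>X. dY i (f i x) (f i y) \<ge> d x y) \<and>
     (\<forall>x\<in>X. \<forall>y\<in>X. (\<Sum>i\<in>I. p i * dY i (f i x) (f i y)) \<le> D * d x y)"

end

theory Submission
  imports Defs
begin

lemma space_borel_of[simp]: "space (borel_of T) = topspace T"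
  unfolding borel_of_def by (rule space_measure_of) (auto dest: openin_subset)

lemma sets_borel_of: "sets (borel_of T) = sigma_sets (topspace T) {U. openin T U}"
  unfolding borel_of_def by (rule sets_measure_of) (auto dest: openin_subset)

lemma openin_borel_of: "openin T U \<Longrightarrow> U \<in> sets (borel_of T)"
  unfolding sets_borel_of by auto

lemma closedin_borel_of: "closedin T C \<Longrightarrow> C \<in> sets (borel_of T)"
proof -
  assume c: "closedin T C"
  then have "topspace T - C \<in> sets (borel_of T)"
    by (intro openin_borel_of) (simp add: closedin_def)
  then have "space (borel_of T) - (topspace T - C) \<in> sets (borel_of T)"
    by blast
  moreover have "space (borel_of T) - (topspace T - C) = C"
    using c closedin_subset by auto
  ultimately show ?thesis by simp
qed

lemma continuous_map_measurable:
  assumes "continuous_map S T g"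
  shows "g \<in> measurable (borel_of S) (borel_of T)"
  unfolding borel_of_def[of T]
proof (rule measurable_measure_of)
  show "{U. openin T U} \<subseteq> Pow (topspace T)" by (auto dest: openin_subset)
  show "g \<in> space (borel_of S) \<rightarrow> topspace T"
    using assms by (auto simp: continuous_map_def)
  fix U assume "U \<in> {U. openin T U}"
  then have "openin S {x \<in> topspace S. g x \<in> U}"
    using assms openin_continuous_map_preimage by blast
  moreover have "g -` U \<inter> space (borel_of S) = {x \<in> topspace S. g x \<in> U}" by auto
  ultimately show "g -` U \<inter> space (borel_of S) \<in> sets (borel_of S)"
    by (simp add: openin_borel_of)
qed

lemma continuous_map_borel_measurable:
  assumes "continuous_map S euclideanreal g"
  shows "g \<in> borel_measurable (borel_of S)"
proof (rule borel_measurableI)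
  fix U :: "real set" assume "open U"
  then have "openin S {x \<in> topspace S. g x \<in> U}"
    using assms openin_continuous_map_preimage by fastforce
  moreover have "g -` U \<inter> space (borel_of S) = {x \<in> topspace S. g x \<in> U}" by auto
  ultimately show "g -` U \<inter> space (borel_of S) \<in> sets (borel_of S)"
    by (simp add: openin_borel_of)
qed

lemma sets_borel_of_finite:
  assumes "finite (topspace T)" "t1_space T"
  shows "sets (borel_of T) = Pow (topspace T)"
proof
  show "sets (borel_of T) \<subseteq> Pow (topspace T)"
    using sets.space_closed[of "borel_of T"] by simp
  show "Pow (topspace T) \<subseteq> sets (borel_of T)"
  proof
    fix A assume "A \<in> Pow (topspace T)"
    then have "closedin T A" using assms t1_space_closedin_finite finite_subset by blast
    then show "A \<in> sets (borel_of T)" by (rule closedin_borel_of)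
  qed
qed

lemma measurable_Pow:
  assumes "sets M = Pow (space M)" "f \<in> space M \<rightarrow> space N"
  shows "f \<in> measurable M N"
  using assms by (auto intro!: measurableI)

lemma (in Metric_space) t1_mtopology: "t1_space mtopology"
  by (simp add: Hausdorff_imp_t1_space Hausdorff_space_mtopology)

lemma (in Metric_space) t1_prod_mtopology: "t1_space (prod_topology mtopology mtopology)"
  by (simp add: Hausdorff_imp_t1_space Hausdorff_space_mtopology Hausdorff_space_prod_topology)

lemma (in Metric_space) cont_dist_prod:
  "continuous_map (prod_topology mtopology mtopology) euclideanreal (\<lambda>z. d (fst z) (snd z))"
  using continuous_map_metric[of "metric (M,d)"] by (simp add: case_prod_beta')

lemma (in Metric_space) cont_dist1:
  "a \<in> M \<Longrightarrow> continuous_map mtopology euclideanreal (d a)"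
  using continuous_on_mdist[of a "metric (M,d)"] by simp

lemma measurable_into_finite_Pow:
  assumes "sets N = Pow (space N)" "finite (space N)" "h \<in> space M \<rightarrow> space N"
    and "\<And>y. y \<in> space N \<Longrightarrow> h -` {y} \<inter> space M \<in> sets M"
  shows "h \<in> measurable M N"
proof (rule measurableI)
  show "\<And>x. x \<in> space M \<Longrightarrow> h x \<in> space N" using assms(3) by auto
  fix A assume "A \<in> sets N"
  then have A: "A \<subseteq> space N" using assms(1) by auto
  then have fA: "finite A" using assms(2) finite_subset by blast
  have "h -` A \<inter> space M = (\<Union>y\<in>A. h -` {y} \<inter> space M)" by auto
  also have "\<dots> \<in> sets M" using fA A assms(4) by (intro sets.finite_UN) auto
  finally show "h -` A \<inter> space M \<in> sets M" .
qed

lemma nn_integral_finite_space: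
  assumes "finite_measure M" "sets M = Pow (space M)" "finite (space M)" "\<And>z. 0 \<le> h z"
  shows "(\<integral>\<^sup>+ z. ennreal (h z) \<partial>M) = ennreal (\<Sum>z\<in>space M. h z * measure M {z})"
proof -
  interpret finite_measure M by fact
  have "(\<integral>\<^sup>+ z. ennreal (h z) \<partial>M) = (\<integral>\<^sup>+ z. ennreal (h z) * indicator (space M) z \<partial>M)"
    by (intro nn_integral_cong) (auto simp: indicator_def)
  also have "\<dots> = (\<Sum>z\<in>space M. ennreal (h z) * emeasure M {z})"
    using assms by (intro nn_integral_indicator_finite) auto
  also have "\<dots> = (\<Sum>z\<in>space M. ennreal (h z * measure M {z}))"
    by (intro sum.cong refl) (simp add: emeasure_eq_measure assms(4) ennreal_mult)
  also have "\<dots> = ennreal (\<Sum>z\<in>space M. h z * measure M {z})"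
    using assms(4) by (intro sum_ennreal) auto
  finally show ?thesis .
qed

lemma nn_integral_finite_space_less_top:
  assumes "prob_space M" "finite (space M)"
  shows "(\<integral>\<^sup>+ z. ennreal (h z) \<partial>M) < \<infinity>"
proof -
  interpret prob_space M by fact
  have "(\<integral>\<^sup>+ z. ennreal (h z) \<partial>M) \<le> (\<integral>\<^sup>+ z. ennreal (\<Sum>w\<in>space M. \<bar>h w\<bar>) \<partial>M)"
  proof (intro nn_integral_mono)
    fix z assume "z \<in> space M"
    then have "h z \<le> (\<Sum>w\<in>space M. \<bar>h w\<bar>)"
      using assms(2) by (meson abs_ge_self abs_ge_zero member_le_sum order_trans)
    then show "ennreal (h z) \<le> ennreal (\<Sum>w\<in>space M. \<bar>h w\<bar>)" by (rule ennreal_leI)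
  qed
  also have "\<dots> < \<infinity>" by (simp add: emeasure_space_1)
  finally show ?thesis .
qed

locale emb = X: Metric_space X d + Y: Metric_space Y dY
  for X :: "'a set" and d and Y :: "'b set" and dY +
  fixes f :: "'a \<Rightarrow> 'b"
  assumes finX: "finite X" and fX: "f \<in> X \<rightarrow> Y"
    and nc: "\<And>x y. x \<in> X \<Longrightarrow> y \<in> X \<Longrightarrow> d x y \<le> dY (f x) (f y)"
begin

abbreviation "MX \<equiv> mborel X d"
abbreviation "MY \<equiv> mborel Y dY"
abbreviation "PX \<equiv> borel_of (prod_topology X.mtopology X.mtopology)"
abbreviation "PY \<equiv> borel_of (prod_topology Y.mtopology Y.mtopology)"

lemma space_MX[simp]: "space MX = X" by (simp add: mborel_def)
lemma space_MY[simp]: "space MY = Y" by (simp add: mborel_def)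
lemma space_PX[simp]: "space PX = X \<times> X" by simp
lemma space_PY[simp]: "space PY = Y \<times> Y" by simp
lemma sets_MX: "sets MX = Pow X"
  unfolding mborel_def by (subst sets_borel_of_finite) (auto simp: finX X.t1_mtopology)
lemma sets_PX: "sets PX = Pow (X \<times> X)"
  by (subst sets_borel_of_finite) (auto simp: finX X.t1_prod_mtopology)

lemma inj: "inj_on f X"
proof (rule inj_onI)
  fix x y assume "x \<in> X" "y \<in> X" "f x = f y"
  then have "d x y \<le> 0" using nc[of x y] fX Y.zero by fastforce
  then show "x = y" using X.nonneg[of x y] X.zero \<open>x \<in> X\<close> \<open>y \<in> X\<close> by force
qed

lemma finite_sets_MY: "F \<subseteq> Y \<Longrightarrow> finite F \<Longrightarrow> F \<in> sets MY"
  unfolding mborel_def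
  by (rule closedin_borel_of) (metis Y.t1_mtopology Y.topspace_mtopology t1_space_closedin_finite)

lemma fst_PY: "fst \<in> measurable PY MY"
  unfolding mborel_def by (rule continuous_map_measurable) (rule continuous_map_fst)
lemma snd_PY: "snd \<in> measurable PY MY"
  unfolding mborel_def by (rule continuous_map_measurable) (rule continuous_map_snd)
lemma fst_PX: "fst \<in> measurable PX MX"
  unfolding mborel_def by (rule continuous_map_measurable) (rule continuous_map_fst)
lemma snd_PX: "snd \<in> measurable PX MX"
  unfolding mborel_def by (rule continuous_map_measurable) (rule continuous_map_snd)

lemma costY_meas: "(\<lambda>z. ennreal (dY (fst z) (snd z))) \<in> borel_measurable PY"
  by (intro measurable_compose[OF continuous_map_borel_measurable[OF Y.cont_dist_prod]]) simp

lemma P1_facts: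
  assumes "\<mu> \<in> P1 X d"
  shows "sets \<mu> = Pow X" "space \<mu> = X" "prob_space \<mu>" "sets \<mu> = sets MX"
  using assms sets_MX sets_eq_imp_space_eq[of \<mu> MX] by (auto simp: P1_def)

lemma coupling_facts:
  assumes "\<pi> \<in> couplings X d \<mu> \<nu>"
  shows "sets \<pi> = Pow (X \<times> X)" "space \<pi> = X \<times> X" "prob_space \<pi>" "sets \<pi> = sets PX"
    "distr \<pi> MX fst = \<mu>" "distr \<pi> MX snd = \<nu>"
  using assms sets_PX sets_eq_imp_space_eq[of \<pi> PX] by (auto simp: couplings_def mborel_def)


lemma f_meas: "sets \<mu> = Pow X \<Longrightarrow> space \<mu> = X \<Longrightarrow> f \<in> measurable \<mu> MY"
  by (rule measurable_Pow) (use fX in auto)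

lemma push_P1:
  assumes "\<mu> \<in> P1 X d"
  shows "distr \<mu> MY f \<in> P1 Y dY"
proof -
  note F = P1_facts[OF assms]
  interpret prob_space \<mu> by (rule F(3))
  have fm: "f \<in> measurable \<mu> MY" using F by (intro f_meas)
  obtain x0 where x0: "x0 \<in> X" using not_empty F(2) by auto
  have y0: "f x0 \<in> Y" using x0 fX by auto
  have "(\<integral>\<^sup>+ y. ennreal (dY (f x0) y) \<partial>distr \<mu> MY f) = (\<integral>\<^sup>+ x. ennreal (dY (f x0) (f x)) \<partial>\<mu>)"
  proof (rule nn_integral_distr[OF fm])
    show "(\<lambda>y. ennreal (dY (f x0) y)) \<in> borel_measurable (distr \<mu> MY f)"
      unfolding measurable_distr_eq1 mborel_def
      by (intro measurable_compose[OF continuous_map_borel_measurable[OF Y.cont_dist1[OF y0]]]) simp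
  qed
  also have "\<dots> < \<infinity>"
    using nn_integral_finite_space_less_top[of \<mu> "\<lambda>x. dY (f x0) (f x)"] F finX by simp
  finally have "(\<integral>\<^sup>+ y. ennreal (dY (f x0) y) \<partial>distr \<mu> MY f) < \<infinity>" .
  moreover have "prob_space (distr \<mu> MY f)" by (rule prob_space_distr[OF fm])
  ultimately show ?thesis using y0 unfolding P1_def by auto
qed


lemma push_coupling:
  assumes "\<pi> \<in> couplings X d \<mu> \<nu>"
  shows "distr \<pi> PY (map_prod f f) \<in> couplings Y dY (distr \<mu> MY f) (distr \<nu> MY f)"
    and "(\<integral>\<^sup>+ z. ennreal (dY (fst z) (snd z)) \<partial>distr \<pi> PY (map_prod f f))
         = (\<integral>\<^sup>+ z. ennreal (dY (f (fst z)) (f (snd z))) \<partial>\<pi>)"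
proof -
  note C = coupling_facts[OF assms]
  have mf: "map_prod f f \<in> measurable \<pi> PY"
    by (rule measurable_Pow) (use C fX in auto)
  have fst\<pi>: "fst \<in> measurable \<pi> MX" using fst_PX measurable_cong_sets[OF C(4) refl] by blast
  have snd\<pi>: "snd \<in> measurable \<pi> MX" using snd_PX measurable_cong_sets[OF C(4) refl] by blast
  have fMX: "f \<in> measurable MX MY" by (rule measurable_Pow) (use fX sets_MX in auto)
  have "distr (distr \<pi> PY (map_prod f f)) MY fst = distr \<pi> MY (fst \<circ> map_prod f f)"
    by (rule distr_distr[OF fst_PY mf])
  also have "\<dots> = distr \<pi> MY (f \<circ> fst)" by (simp add: comp_def)
  also have "\<dots> = distr (distr \<pi> MX fst) MY f" by (rule distr_distr[OF fMX fst\<pi>, symmetric])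
  finally have m1: "distr (distr \<pi> PY (map_prod f f)) MY fst = distr \<mu> MY f" using C(5) by simp
  have "distr (distr \<pi> PY (map_prod f f)) MY snd = distr \<pi> MY (snd \<circ> map_prod f f)"
    by (rule distr_distr[OF snd_PY mf])
  also have "\<dots> = distr \<pi> MY (f \<circ> snd)" by (simp add: comp_def)
  also have "\<dots> = distr (distr \<pi> MX snd) MY f" by (rule distr_distr[OF fMX snd\<pi>, symmetric])
  finally have m2: "distr (distr \<pi> PY (map_prod f f)) MY snd = distr \<nu> MY f" using C(6) by simp
  have ps: "prob_space (distr \<pi> PY (map_prod f f))"
    by (rule prob_space.prob_space_distr[OF C(3) mf])
  show "distr \<pi> PY (map_prod f f) \<in> couplings Y dY (distr \<mu> MY f) (distr \<nu> MY f)"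
    unfolding couplings_def using m1 m2 ps by (simp add: mborel_def)
  show "(\<integral>\<^sup>+ z. ennreal (dY (fst z) (snd z)) \<partial>distr \<pi> PY (map_prod f f))
         = (\<integral>\<^sup>+ z. ennreal (dY (f (fst z)) (f (snd z))) \<partial>\<pi>)"
    by (subst nn_integral_distr[OF mf]) (auto simp: costY_meas)
qed


lemma pull_coupling:
  assumes \<mu>: "\<mu> \<in> P1 X d" and \<nu>: "\<nu> \<in> P1 X d"
    and \<sigma>: "\<sigma> \<in> couplings Y dY (distr \<mu> MY f) (distr \<nu> MY f)"
  shows "\<exists>\<pi>\<in>couplings X d \<mu> \<nu>. (\<integral>\<^sup>+ z. ennreal (d (fst z) (snd z)) \<partial>\<pi>)
            \<le> (\<integral>\<^sup>+ z. ennreal (dY (fst z) (snd z)) \<partial>\<sigma>)"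
proof -
  note M = P1_facts[OF \<mu>] and N = P1_facts[OF \<nu>]
  obtain x0 where x0: "x0 \<in> X" using prob_space.not_empty[OF M(3)] M(2) by auto
  define g where "g y = (if y \<in> f ` X then inv_into X f y else x0)" for y
  have gX: "g y \<in> X" for y using x0 by (auto simp: g_def inv_into_into)
  have gf: "g (f x) = x" if "x \<in> X" for x using that inj by (auto simp: g_def)
  have \<sigma>sets: "sets \<sigma> = sets PY" and \<sigma>ps: "prob_space \<sigma>"
    and \<sigma>1: "distr \<sigma> MY fst = distr \<mu> MY f" and \<sigma>2: "distr \<sigma> MY snd = distr \<nu> MY f"
    using \<sigma> by (auto simp: couplings_def mborel_def)
  have \<sigma>space: "space \<sigma> = Y \<times> Y" using sets_eq_imp_space_eq[OF \<sigma>sets] by simp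
  have fXY: "f ` X \<subseteq> Y" using fX by auto
  have pre: "g -` A \<inter> Y \<in> sets MY" for A
  proof (cases "x0 \<in> A")
    case False
    then have "g -` A \<inter> Y \<subseteq> f ` X" by (auto simp: g_def split: if_splits)
    then show ?thesis using finX by (intro finite_sets_MY) (auto intro: finite_subset[OF _ finite_imageI])
  next
    case True
    then have sub: "Y - (g -` A \<inter> Y) \<subseteq> f ` X" by (auto simp: g_def split: if_splits)
    then have "Y - (g -` A \<inter> Y) \<in> sets MY" using finX by (intro finite_sets_MY) (auto intro: finite_subset[OF _ finite_imageI])
    then have "space MY - (Y - (g -` A \<inter> Y)) \<in> sets MY" by blast
    moreover have "space MY - (Y - (g -` A \<inter> Y)) = g -` A \<inter> Y" by auto
    ultimately show ?thesis by simp
  qed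
  have gm: "g \<in> measurable MY MX"
    by (rule measurableI) (use gX pre in auto)
  have gfst: "(\<lambda>z. g (fst z)) \<in> measurable PY MX" using measurable_comp[OF fst_PY gm] by (simp add: comp_def)
  have gsnd: "(\<lambda>z. g (snd z)) \<in> measurable PY MX" using measurable_comp[OF snd_PY gm] by (simp add: comp_def)
  have mgPY: "map_prod g g \<in> measurable PY PX"
  proof (rule measurable_into_finite_Pow)
    show "sets PX = Pow (space PX)" using sets_PX by simp
    show "finite (space PX)" using finX by simp
    show "map_prod g g \<in> space PY \<rightarrow> space PX" using gX by auto
    fix y assume "y \<in> space PX"
    have "map_prod g g -` {y} \<inter> space PY
       = ((\<lambda>z. g (fst z)) -` {fst y} \<inter> space PY) \<inter> ((\<lambda>z. g (snd z)) -` {snd y} \<inter> space PY)"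
      by (cases y) auto
    also have "\<dots> \<in> sets PY"
      using \<open>y \<in> space PX\<close> sets_MX
      by (intro sets.Int measurable_sets[OF gfst] measurable_sets[OF gsnd]) auto
    finally show "map_prod g g -` {y} \<inter> space PY \<in> sets PY" .
  qed
  have mg: "map_prod g g \<in> measurable \<sigma> PX" using mgPY measurable_cong_sets[OF \<sigma>sets refl] by blast
  have fst\<sigma>: "fst \<in> measurable \<sigma> MY" using fst_PY measurable_cong_sets[OF \<sigma>sets refl] by blast
  have snd\<sigma>: "snd \<in> measurable \<sigma> MY" using snd_PY measurable_cong_sets[OF \<sigma>sets refl] by blast
  have fmu: "f \<in> measurable \<mu> MY" using M by (intro f_meas)
  have fnu: "f \<in> measurable \<nu> MY" using N by (intro f_meas)
  define \<pi> where "\<pi> = distr \<sigma> PX (map_prod g g)"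
  have m1: "distr \<pi> MX fst = \<mu>"
  proof -
    have "distr \<pi> MX fst = distr \<sigma> MX (fst \<circ> map_prod g g)"
      unfolding \<pi>_def by (rule distr_distr[OF fst_PX mg])
    also have "\<dots> = distr \<sigma> MX (g \<circ> fst)" by (simp add: comp_def)
    also have "\<dots> = distr (distr \<sigma> MY fst) MX g" by (rule distr_distr[OF gm fst\<sigma>, symmetric])
    also have "\<dots> = distr (distr \<mu> MY f) MX g" using \<sigma>1 by simp
    also have "\<dots> = distr \<mu> MX (g \<circ> f)" by (rule distr_distr[OF gm fmu])
    also have "\<dots> = distr \<mu> \<mu> (\<lambda>x. x)" by (rule distr_cong) (use M gf in auto)
    finally show ?thesis by simp
  qed
  have m2: "distr \<pi> MX snd = \<nu>"
  proof -
    have "distr \<pi> MX snd = distr \<sigma> MX (snd \<circ> map_prod g g)"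
      unfolding \<pi>_def by (rule distr_distr[OF snd_PX mg])
    also have "\<dots> = distr \<sigma> MX (g \<circ> snd)" by (simp add: comp_def)
    also have "\<dots> = distr (distr \<sigma> MY snd) MX g" by (rule distr_distr[OF gm snd\<sigma>, symmetric])
    also have "\<dots> = distr (distr \<nu> MY f) MX g" using \<sigma>2 by simp
    also have "\<dots> = distr \<nu> MX (g \<circ> f)" by (rule distr_distr[OF gm fnu])
    also have "\<dots> = distr \<nu> \<nu> (\<lambda>x. x)" by (rule distr_cong) (use N gf in auto)
    finally show ?thesis by simp
  qed
  have ps: "prob_space \<pi>" unfolding \<pi>_def by (rule prob_space.prob_space_distr[OF \<sigma>ps mg])
  have cpl: "\<pi> \<in> couplings X d \<mu> \<nu>"
    unfolding couplings_def using m1 m2 ps by (simp add: \<pi>_def mborel_def)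
  have fXsets: "{a \<in> space MY. a \<in> f ` X} \<in> sets MY"
    using finX fXY by (intro finite_sets_MY) auto
  have ae1: "AE z in \<sigma>. fst z \<in> f ` X"
  proof -
    have "AE a in distr \<mu> MY f. a \<in> f ` X"
      by (subst AE_distr_iff[OF fmu fXsets]) (auto intro!: AE_I2 simp: M)
    then have "AE a in distr \<sigma> MY fst. a \<in> f ` X" unfolding \<sigma>1 .
    then show ?thesis by (subst (asm) AE_distr_iff[OF fst\<sigma> fXsets])
  qed
  have ae2: "AE z in \<sigma>. snd z \<in> f ` X"
  proof -
    have "AE a in distr \<nu> MY f. a \<in> f ` X"
      by (subst AE_distr_iff[OF fnu fXsets]) (auto intro!: AE_I2 simp: N)
    then have "AE a in distr \<sigma> MY snd. a \<in> f ` X" unfolding \<sigma>2 .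
    then show ?thesis by (subst (asm) AE_distr_iff[OF snd\<sigma> fXsets])
  qed
  have "(\<integral>\<^sup>+ z. ennreal (d (fst z) (snd z)) \<partial>\<pi>) = (\<integral>\<^sup>+ z. ennreal (d (g (fst z)) (g (snd z))) \<partial>\<sigma>)"
    unfolding \<pi>_def by (subst nn_integral_distr[OF mg]) (auto intro!: measurable_Pow simp: sets_PX)
  also have "\<dots> \<le> (\<integral>\<^sup>+ z. ennreal (dY (fst z) (snd z)) \<partial>\<sigma>)"
  proof (rule nn_integral_mono_AE)
    show "AE z in \<sigma>. ennreal (d (g (fst z)) (g (snd z))) \<le> ennreal (dY (fst z) (snd z))"
      using ae1 ae2
    proof eventually_elim
      case (elim z)
      then obtain x y where "x \<in> X" "y \<in> X" "fst z = f x" "snd z = f y" by auto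
      then show ?case using nc[of x y] gf by (auto intro: ennreal_leI)
    qed
  qed
  finally show ?thesis using cpl by blast
qed


lemma prod_coupling:
  assumes \<mu>: "\<mu> \<in> P1 X d" and \<nu>: "\<nu> \<in> P1 X d"
  shows "\<mu> \<Otimes>\<^sub>M \<nu> \<in> couplings X d \<mu> \<nu>"
proof -
  note M = P1_facts[OF \<mu>] and N = P1_facts[OF \<nu>]
  interpret m: prob_space \<mu> by (rule M(3))
  interpret n: prob_space \<nu> by (rule N(3))
  have sp: "space (\<mu> \<Otimes>\<^sub>M \<nu>) = X \<times> X" using M N by (simp add: space_pair_measure)
  have ss: "sets (\<mu> \<Otimes>\<^sub>M \<nu>) = Pow (X \<times> X)"
  proof
    show "sets (\<mu> \<Otimes>\<^sub>M \<nu>) \<subseteq> Pow (X \<times> X)" using sets.space_closed[of "\<mu> \<Otimes>\<^sub>M \<nu>"] sp by simp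
    show "Pow (X \<times> X) \<subseteq> sets (\<mu> \<Otimes>\<^sub>M \<nu>)"
    proof
      fix C assume C: "C \<in> Pow (X \<times> X)"
      then have fC: "finite C" using finX by (auto intro: finite_subset)
      have "C = (\<Union>z\<in>C. {fst z} \<times> {snd z})" by auto
      also have "\<dots> \<in> sets (\<mu> \<Otimes>\<^sub>M \<nu>)"
        using fC C M N by (intro sets.finite_UN pair_measureI) auto
      finally show "C \<in> sets (\<mu> \<Otimes>\<^sub>M \<nu>)" .
    qed
  qed
  have ps: "prob_space (\<mu> \<Otimes>\<^sub>M \<nu>)" by (rule prob_space_pair[OF M(3) N(3)])
  have m1: "distr (\<mu> \<Otimes>\<^sub>M \<nu>) MX fst = \<mu>"
  proof -
    have "distr (\<mu> \<Otimes>\<^sub>M \<nu>) MX fst = distr (\<mu> \<Otimes>\<^sub>M \<nu>) \<mu> fst"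
      by (rule distr_cong) (use M in auto)
    also have "\<dots> = \<mu>" by (rule n.distr_pair_fst)
    finally show ?thesis .
  qed
  have m2: "distr (\<mu> \<Otimes>\<^sub>M \<nu>) MX snd = \<nu>"
  proof -
    have "distr (\<mu> \<Otimes>\<^sub>M \<nu>) MX snd = distr (\<mu> \<Otimes>\<^sub>M \<nu>) \<nu> snd"
      by (rule distr_cong) (use N in auto)
    also have "\<dots> = \<nu>"
    proof (rule measure_eqI)
      show "sets (distr (\<mu> \<Otimes>\<^sub>M \<nu>) \<nu> snd) = sets \<nu>" by simp
      fix A assume A: "A \<in> sets (distr (\<mu> \<Otimes>\<^sub>M \<nu>) \<nu> snd)"
      then have A': "A \<in> sets \<nu>" by simp
      have "emeasure (distr (\<mu> \<Otimes>\<^sub>M \<nu>) \<nu> snd) A = emeasure (\<mu> \<Otimes>\<^sub>M \<nu>) (snd -` A \<inter> space (\<mu> \<Otimes>\<^sub>M \<nu>))"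
        by (rule emeasure_distr) (use A' in auto)
      also have "snd -` A \<inter> space (\<mu> \<Otimes>\<^sub>M \<nu>) = space \<mu> \<times> A"
        using A' sets.sets_into_space[OF A'] by (auto simp: space_pair_measure)
      also have "emeasure (\<mu> \<Otimes>\<^sub>M \<nu>) (space \<mu> \<times> A) = emeasure \<mu> (space \<mu>) * emeasure \<nu> A"
        by (rule n.emeasure_pair_measure_Times) (use A' in auto)
      also have "\<dots> = emeasure \<nu> A" by (simp add: m.emeasure_space_1)
      finally show "emeasure (distr (\<mu> \<Otimes>\<^sub>M \<nu>) \<nu> snd) A = emeasure \<nu> A" .
    qed
    finally show ?thesis .
  qed
  show ?thesis unfolding couplings_def using ss ps m1 m2 sets_PX by (simp add: mborel_def)
qed


lemma cost_finite:
  assumes "\<pi> \<in> couplings X d \<mu> \<nu>"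
  shows "(\<integral>\<^sup>+ z. ennreal (h z) \<partial>\<pi>) < \<infinity>"
  using coupling_facts[OF assms] finX by (intro nn_integral_finite_space_less_top) auto

lemma INFX_finite:
  assumes "\<mu> \<in> P1 X d" "\<nu> \<in> P1 X d"
  shows "(INF \<pi>\<in>couplings X d \<mu> \<nu>. \<integral>\<^sup>+ z. ennreal (d (fst z) (snd z)) \<partial>\<pi>) < \<infinity>"
  using prod_coupling[OF assms] cost_finite[OF prod_coupling[OF assms]]
  by (meson INF_lower le_less_trans)

lemma wass_push_le:
  assumes "\<pi> \<in> couplings X d \<mu> \<nu>"
  shows "wass Y dY (distr \<mu> MY f) (distr \<nu> MY f)
     \<le> (\<Sum>z\<in>X \<times> X. dY (f (fst z)) (f (snd z)) * measure \<pi> {z})"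
proof -
  note C = coupling_facts[OF assms]
  note P = push_coupling[OF assms]
  have eq: "(\<integral>\<^sup>+ z. ennreal (dY (f (fst z)) (f (snd z))) \<partial>\<pi>)
      = ennreal (\<Sum>z\<in>X \<times> X. dY (f (fst z)) (f (snd z)) * measure \<pi> {z})"
    using nn_integral_finite_space[of \<pi> "\<lambda>z. dY (f (fst z)) (f (snd z))"] C finX
      prob_space.finite_measure[OF C(3)] by auto
  have nn: "0 \<le> (\<Sum>z\<in>X \<times> X. dY (f (fst z)) (f (snd z)) * measure \<pi> {z})"
    by (intro sum_nonneg mult_nonneg_nonneg) auto
  have "(INF \<sigma>\<in>couplings Y dY (distr \<mu> MY f) (distr \<nu> MY f). \<integral>\<^sup>+ z. ennreal (dY (fst z) (snd z)) \<partial>\<sigma>)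
     \<le> ennreal (\<Sum>z\<in>X \<times> X. dY (f (fst z)) (f (snd z)) * measure \<pi> {z})"
    using P(1) by (rule INF_lower2) (simp add: P(2) eq)
  then have "wass Y dY (distr \<mu> MY f) (distr \<nu> MY f)
     \<le> enn2real (ennreal (\<Sum>z\<in>X \<times> X. dY (f (fst z)) (f (snd z)) * measure \<pi> {z}))"
    unfolding wass_def by (rule enn2real_mono) simp
  then show ?thesis using nn by simp
qed

lemma wass_mono:
  assumes \<mu>: "\<mu> \<in> P1 X d" and \<nu>: "\<nu> \<in> P1 X d"
  shows "wass X d \<mu> \<nu> \<le> wass Y dY (distr \<mu> MY f) (distr \<nu> MY f)"
proof -
  let ?IX = "(INF \<pi>\<in>couplings X d \<mu> \<nu>. \<integral>\<^sup>+ z. ennreal (d (fst z) (snd z)) \<partial>\<pi>)"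
  let ?IY = "(INF \<sigma>\<in>couplings Y dY (distr \<mu> MY f) (distr \<nu> MY f). \<integral>\<^sup>+ z. ennreal (dY (fst z) (snd z)) \<partial>\<sigma>)"
  have le: "?IX \<le> ?IY"
  proof (rule INF_greatest)
    fix \<sigma> assume "\<sigma> \<in> couplings Y dY (distr \<mu> MY f) (distr \<nu> MY f)"
    from pull_coupling[OF \<mu> \<nu> this] obtain \<pi> where "\<pi> \<in> couplings X d \<mu> \<nu>"
      "(\<integral>\<^sup>+ z. ennreal (d (fst z) (snd z)) \<partial>\<pi>) \<le> (\<integral>\<^sup>+ z. ennreal (dY (fst z) (snd z)) \<partial>\<sigma>)"
      by blast
    then show "?IX \<le> (\<integral>\<^sup>+ z. ennreal (dY (fst z) (snd z)) \<partial>\<sigma>)"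
      by (meson INF_lower order_trans)
  qed
  have pc: "\<mu> \<Otimes>\<^sub>M \<nu> \<in> couplings X d \<mu> \<nu>" by (rule prod_coupling[OF \<mu> \<nu>])
  have "?IY \<le> (\<integral>\<^sup>+ z. ennreal (dY (fst z) (snd z)) \<partial>distr (\<mu> \<Otimes>\<^sub>M \<nu>) PY (map_prod f f))"
    by (rule INF_lower) (rule push_coupling(1)[OF pc])
  also have "\<dots> < \<infinity>" unfolding push_coupling(2)[OF pc] by (rule cost_finite[OF pc])
  finally have "?IY < \<infinity>" .
  with le show ?thesis unfolding wass_def by (auto intro!: enn2real_mono)
qed

end


theorem lemma2:
  fixes X :: "'a set" and d :: "'a \<Rightarrow> 'a \<Rightarrow> real"
    and I :: "'i set" and Y :: "'i \<Rightarrow> 'b set" and dY :: "'i \<Rightarrow> 'b \<Rightarrow> 'b \<Rightarrow> real"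
    and D :: real and p :: "'i \<Rightarrow> real" and f :: "'i \<Rightarrow> 'a \<Rightarrow> 'b"
  assumes "Metric_space X d" and "finite X"
    and "finite I" and "\<forall>i\<in>I. Metric_space (Y i) (dY i)"
    and "stoch_embedding X d I Y dY D p f"
  shows "stoch_embedding (P1 X d) (wass X d) I (\<lambda>i. P1 (Y i) (dY i)) (\<lambda>i. wass (Y i) (dY i))
           D p (\<lambda>i \<mu>. distr \<mu> (mborel (Y i) (dY i)) (f i))"
proof -
  have fI: "finite I" and D1: "1 \<le> D" and p0: "\<And>i. i \<in> I \<Longrightarrow> p i \<ge> 0" and p1: "(\<Sum>i\<in>I. p i) = 1"
    and fY: "\<And>i. i \<in> I \<Longrightarrow> f i \<in> X \<rightarrow> Y i"
    and nc: "\<And>i x y. i \<in> I \<Longrightarrow> x \<in> X \<Longrightarrow> y \<in> X \<Longrightarrow> dY i (f i x) (f i y) \<ge> d x y"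
    and dist: "\<And>x y. x \<in> X \<Longrightarrow> y \<in> X \<Longrightarrow> (\<Sum>i\<in>I. p i * dY i (f i x) (f i y)) \<le> D * d x y"
    using assms(5) unfolding stoch_embedding_def by auto
  have E: "emb X d (Y i) (dY i) (f i)" if "i \<in> I" for i
    using assms(1,2,4) that fY nc by (intro emb.intro emb_axioms.intro) auto
  have E0: "emb X d X d (\<lambda>x. x)"
    using assms(1,2) by (intro emb.intro emb_axioms.intro) auto
  have push: "\<forall>i\<in>I. (\<lambda>\<mu>. distr \<mu> (mborel (Y i) (dY i)) (f i)) \<in> P1 X d \<rightarrow> P1 (Y i) (dY i)"
    using emb.push_P1[OF E] by blast
  have mono: "\<forall>i\<in>I. \<forall>\<mu>\<in>P1 X d. \<forall>\<nu>\<in>P1 X d. wass (Y i) (dY i) (distr \<mu> (mborel (Y i) (dY i)) (f i))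
        (distr \<nu> (mborel (Y i) (dY i)) (f i)) \<ge> wass X d \<mu> \<nu>"
    using emb.wass_mono[OF E] by blast
  have distort: "(\<Sum>i\<in>I. p i * wass (Y i) (dY i) (distr \<mu> (mborel (Y i) (dY i)) (f i))
        (distr \<nu> (mborel (Y i) (dY i)) (f i))) \<le> D * wass X d \<mu> \<nu>"
    if \<mu>: "\<mu> \<in> P1 X d" and \<nu>: "\<nu> \<in> P1 X d" for \<mu> \<nu>
  proof -
    define L where "L = (\<Sum>i\<in>I. p i * wass (Y i) (dY i) (distr \<mu> (mborel (Y i) (dY i)) (f i))
        (distr \<nu> (mborel (Y i) (dY i)) (f i)))"
    have L0: "0 \<le> L" unfolding L_def wass_def using p0 by (intro sum_nonneg mult_nonneg_nonneg) auto
    have Dpos: "0 < D" using D1 by simp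
    let ?c = "\<lambda>\<pi>. \<integral>\<^sup>+ z. ennreal (d (fst z) (snd z)) \<partial>\<pi>"
    have key: "ennreal (L / D) \<le> ?c \<pi>" if \<pi>: "\<pi> \<in> couplings X d \<mu> \<nu>" for \<pi>
    proof -
      have sp: "space \<pi> = X \<times> X" and ss: "sets \<pi> = Pow (X \<times> X)" and ps: "prob_space \<pi>"
        using emb.coupling_facts[OF E0 \<pi>] by auto
      define w where "w z = measure \<pi> {z}" for z
      have w0: "0 \<le> w z" for z by (simp add: w_def)
      have cost: "?c \<pi> = ennreal (\<Sum>z\<in>X \<times> X. d (fst z) (snd z) * w z)"
        using nn_integral_finite_space[of \<pi> "\<lambda>z. d (fst z) (snd z)"] sp ss assms(2)
          prob_space.finite_measure[OF ps] Metric_space.nonneg[OF assms(1)] by (auto simp: w_def)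
      have "L \<le> (\<Sum>i\<in>I. p i * (\<Sum>z\<in>X \<times> X. dY i (f i (fst z)) (f i (snd z)) * w z))"
        unfolding L_def w_def
        by (intro sum_mono mult_left_mono p0 emb.wass_push_le[OF E \<pi>]) auto
      also have "\<dots> = (\<Sum>z\<in>X \<times> X. (\<Sum>i\<in>I. p i * dY i (f i (fst z)) (f i (snd z))) * w z)"
        unfolding sum_distrib_left sum_distrib_right mult.assoc
        by (rule sum.swap)
      also have "\<dots> \<le> (\<Sum>z\<in>X \<times> X. (D * d (fst z) (snd z)) * w z)"
        by (intro sum_mono mult_right_mono w0 dist) auto
      also have "\<dots> = D * (\<Sum>z\<in>X \<times> X. d (fst z) (snd z) * w z)"
        by (simp add: sum_distrib_left mult.assoc)
      finally have "L / D \<le> (\<Sum>z\<in>X \<times> X. d (fst z) (snd z) * w z)"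
        using Dpos by (simp add: divide_le_eq mult.commute)
      then show ?thesis unfolding cost by (rule ennreal_leI)
    qed
    have "ennreal (L / D) \<le> (INF \<pi>\<in>couplings X d \<mu> \<nu>. ?c \<pi>)"
      by (rule INF_greatest) (rule key)
    then have "enn2real (ennreal (L / D)) \<le> wass X d \<mu> \<nu>"
      unfolding wass_def using emb.INFX_finite[OF E0 \<mu> \<nu>] by (auto intro!: enn2real_mono)
    then have "L / D \<le> wass X d \<mu> \<nu>" using L0 Dpos by simp
    then show ?thesis using Dpos unfolding L_def[symmetric] by (simp add: divide_le_eq mult.commute)
  qed
  show ?thesis
    unfolding stoch_embedding_def
  proof (intro conjI)
    show "\<forall>x\<in>P1 X d. \<forall>y\<in>P1 X d. (\<Sum>i\<in>I. p i * wass (Y i) (dY i) (distr x (mborel (Y i) (dY i)) (f i))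
        (distr y (mborel (Y i) (dY i)) (f i))) \<le> D * wass X d x y"
      using distort by blast
  qed (use fI D1 p0 p1 push mono in blast)+
qed

end
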